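(* Let $G$ be an abelian group and let $Z$ be a finite multiset of elements of $G$ with $\dim(Z)\geqslant1$. Set $K(Z)=|Z|/\dim(Z)$. Then $$|Z|\geqslant\frac{K(Z)}{2(2+\log_2K(Z))}\cdot\log_2|\Sigma(Z)|.$$
   Context: $|Z|$ is the size of $Z$ counted with multiplicity. $\Sigma(Z)=\{\sum_{z\in Z'}z:Z'\subseteq Z\}$, where $Z'$ ranges over sub-multisets of $Z$. A (multi)set is dissociated if any two of its sub-multisets with equal sums are equal. $\dim(Z)$ is the size of the largest dissociated sub-multiset of $Z$. *)

theory Defs
  imports Complex_Main "HOL-Library.Multiset"
begin

definition subset_sums :: "'a::comm_monoid_add multiset \<Rightarrow> 'a set" where
  "subset_sums Z = {sum_mset Z' | Z'. Z' \<subseteq># Z}"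

definition dissociated :: "'a::comm_monoid_add multiset \<Rightarrow> bool" where
  "dissociated Z \<longleftrightarrow> (\<forall>A B. A \<subseteq># Z \<longrightarrow> B \<subseteq># Z \<longrightarrow> sum_mset A = sum_mset B \<longrightarrow> A = B)"

definition mdim :: "'a::comm_monoid_add multiset \<Rightarrow> nat" where
  "mdim Z = Max {size W | W. W \<subseteq># Z \<and> dissociated W}"

end

theory Submission
  imports Defs
begin


definition shatters :: "'b set set \<Rightarrow> 'b set \<Rightarrow> bool" where
  "shatters F T \<longleftrightarrow> (\<forall>A. A \<subseteq> T \<longrightarrow> (\<exists>S\<in>F. S \<inter> T = A))"

lemma pajor:
  assumes "finite U" "F \<subseteq> Pow U"
  shows "card F \<le> card {T. T \<subseteq> U \<and> shatters F T}"
  using assms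
proof (induction U arbitrary: F rule: finite_induct)
  case empty
  then have "F \<subseteq> {{}}" by auto
  show ?case
  proof (cases "F = {}")
    case True then show ?thesis by simp
  next
    case False
    then have "F = {{}}" using \<open>F \<subseteq> {{}}\<close> by auto
    then have "{T. T \<subseteq> {} \<and> shatters F T} = {{}}" by (auto simp: shatters_def)
    then show ?thesis using \<open>F = {{}}\<close> by simp
  qed
next
  case (insert x U0)
  define P where "P = {S\<in>F. x \<notin> S}"
  define Q where "Q = (\<lambda>S. S - {x}) ` {S\<in>F. x \<in> S}"
  have finF: "finite F" using insert.prems insert.hyps(1) finite_subset by blast
  have PU: "P \<subseteq> Pow U0" using insert.prems by (auto simp: P_def)
  have QU: "Q \<subseteq> Pow U0" using insert.prems by (auto simp: Q_def)
  have fP: "finite P" "finite Q" using finF by (auto simp: P_def Q_def)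
  have "card F = card P + card {S\<in>F. x \<in> S}"
  proof -
    have "F = P \<union> {S\<in>F. x \<in> S}" by (auto simp: P_def)
    moreover have "P \<inter> {S\<in>F. x \<in> S} = {}" by (auto simp: P_def)
    ultimately show ?thesis using finF by (metis card_Un_disjoint finite_Un)
  qed
  moreover have "card {S\<in>F. x \<in> S} = card Q"
    unfolding Q_def by (rule card_image[symmetric]) (rule inj_onI, metis (no_types, lifting) insert_Diff mem_Collect_eq)
  moreover have "card P + card Q = card (P \<union> Q) + card (P \<inter> Q)"
    using fP card_Un_Int by blast
  ultimately have cF: "card F = card (P \<union> Q) + card (P \<inter> Q)" by simp
  have IH1: "card (P \<union> Q) \<le> card {T. T \<subseteq> U0 \<and> shatters (P \<union> Q) T}"
    by (rule insert.IH) (use PU QU in blast)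
  have IH2: "card (P \<inter> Q) \<le> card {T. T \<subseteq> U0 \<and> shatters (P \<inter> Q) T}"
    by (rule insert.IH) (use PU in blast)
  define S0 where "S0 = {T. T \<subseteq> U0 \<and> shatters (P \<union> Q) T}"
  define S1 where "S1 = {T. T \<subseteq> U0 \<and> shatters (P \<inter> Q) T}"
  define SF where "SF = {T. T \<subseteq> insert x U0 \<and> shatters F T}"
  have "SF \<subseteq> Pow (insert x U0)" unfolding SF_def by blast
  then have finSF: "finite SF" using insert.hyps(1) finite_subset by (metis finite_Pow_iff finite_insert)
  have sub0: "S0 \<subseteq> {T\<in>SF. x \<notin> T}"
  proof
    fix T assume "T \<in> S0"
    then have T: "T \<subseteq> U0" "shatters (P \<union> Q) T" by (auto simp: S0_def)
    have "x \<notin> T" using T insert.hyps(2) by auto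
    have "shatters F T" unfolding shatters_def
    proof (intro allI impI)
      fix A assume "A \<subseteq> T"
      then obtain S where S: "S \<in> P \<union> Q" "S \<inter> T = A" using T(2) by (auto simp: shatters_def)
      show "\<exists>S\<in>F. S \<inter> T = A"
      proof (cases "S \<in> P")
        case True then show ?thesis using S by (auto simp: P_def)
      next
        case False
        then obtain S' where "S' \<in> F" "S = S' - {x}" using S by (auto simp: Q_def)
        then show ?thesis using S \<open>x \<notin> T\<close> by (intro bexI[of _ S']) auto
      qed
    qed
    then show "T \<in> {T\<in>SF. x \<notin> T}" using T \<open>x \<notin> T\<close> by (auto simp: SF_def)
  qed
  have sub1: "insert x ` S1 \<subseteq> {T\<in>SF. x \<in> T}"
  proof
    fix T' assume "T' \<in> insert x ` S1"
    then obtain T where T: "T \<subseteq> U0" "shatters (P \<inter> Q) T" and T': "T' = insert x T" by (auto simp: S1_def)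
    have "x \<notin> T" using T insert.hyps(2) by auto
    have "shatters F T'" unfolding shatters_def
    proof (intro allI impI)
      fix A assume A: "A \<subseteq> T'"
      then have "A - {x} \<subseteq> T" using T' by auto
      then have "\<exists>S\<in>P \<inter> Q. S \<inter> T = A - {x}" using T(2) unfolding shatters_def by blast
      then obtain S where S: "S \<in> P \<inter> Q" "S \<inter> T = A - {x}" by blast
      have "S \<in> F" "x \<notin> S" using S by (auto simp: P_def)
      have "S \<in> Q" using S by blast
      then obtain S' where S': "S' \<in> F" "x \<in> S'" "S = S' - {x}" unfolding Q_def by blast
      have "insert x S \<in> F" using S' by (metis insert_Diff)
      show "\<exists>S\<in>F. S \<inter> T' = A"
      proof (cases "x \<in> A")
        case True
        have "insert x S \<inter> T' = insert x (S \<inter> T)" using T' by blast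
        also have "\<dots> = A" using S(2) True by blast
        finally show ?thesis using \<open>insert x S \<in> F\<close> by blast
      next
        case False
        have "S \<inter> T' = S \<inter> T" using T' \<open>x \<notin> S\<close> by blast
        also have "\<dots> = A" using S(2) False by blast
        finally show ?thesis using \<open>S \<in> F\<close> by blast
      qed
    qed
    then show "T' \<in> {T\<in>SF. x \<in> T}" using T T' by (auto simp: SF_def)
  qed
  have "card S1 = card (insert x ` S1)"
  proof (rule card_image[symmetric])
    show "inj_on (insert x) S1"
    proof (rule inj_onI)
      fix A B assume "A \<in> S1" "B \<in> S1" "insert x A = insert x B"
      moreover have "x \<notin> A" "x \<notin> B" using calculation insert.hyps(2) by (auto simp: S1_def)
      ultimately show "A = B" by (metis Diff_insert_absorb)
    qed
  qed
  also have "\<dots> \<le> card {T\<in>SF. x \<in> T}" using sub1 finSF by (intro card_mono) auto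
  finally have c1: "card S1 \<le> card {T\<in>SF. x \<in> T}" .
  have c0: "card S0 \<le> card {T\<in>SF. x \<notin> T}" using sub0 finSF by (intro card_mono) auto
  have csum: "card {T\<in>SF. x \<notin> T} + card {T\<in>SF. x \<in> T} = card SF"
  proof -
    have "SF = {T\<in>SF. x \<notin> T} \<union> {T\<in>SF. x \<in> T}" by auto
    moreover have "{T\<in>SF. x \<notin> T} \<inter> {T\<in>SF. x \<in> T} = {}" by auto
    ultimately show ?thesis using finSF by (metis card_Un_disjoint finite_Un)
  qed
  have i1: "card (P \<union> Q) \<le> card S0" using IH1 by (simp add: S0_def)
  have i2: "card (P \<inter> Q) \<le> card S1" using IH2 by (simp add: S1_def)
  have "card F \<le> card SF" using cF i1 i2 c0 c1 csum by linarith
  then show ?case by (simp add: SF_def)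
qed




definition cd :: "nat set \<Rightarrow> nat" where "cd S = (\<Sum>i\<in>S. 2^i)"

lemma sum_pow2: "(\<Sum>i<M. (2::nat)^i) + 1 = 2^M"
  by (induction M) auto

lemma cd_less: assumes "B \<subseteq> {..<M}" shows "cd B < 2^M"
proof -
  have "cd B \<le> (\<Sum>i<M. (2::nat)^i)" unfolding cd_def using assms by (intro sum_mono2) auto
  then show ?thesis using sum_pow2[of M] by linarith
qed

definition fs :: "'a::ab_group_add list \<Rightarrow> nat set \<Rightarrow> 'a" where
  "fs xs S = (\<Sum>i\<in>S. xs!i)"

definition Fam :: "'a::ab_group_add list \<Rightarrow> nat set set" where
  "Fam xs = {S. S \<subseteq> {..<length xs} \<and> (\<forall>S'. S' \<subseteq> {..<length xs} \<and> fs xs S' = fs xs S \<longrightarrow> cd S \<le> cd S')}"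

lemma Fam_covers: "fs xs ` Pow {..<length xs} \<subseteq> fs xs ` Fam xs"
proof
  fix s assume "s \<in> fs xs ` Pow {..<length xs}"
  then obtain S0 where S0: "S0 \<subseteq> {..<length xs}" "s = fs xs S0" by auto
  obtain S where S: "S \<subseteq> {..<length xs} \<and> fs xs S = s"
    and m: "\<forall>S'. S' \<subseteq> {..<length xs} \<and> fs xs S' = s \<longrightarrow> cd S \<le> cd S'"
    using ex_has_least_nat[of "\<lambda>S. S \<subseteq> {..<length xs} \<and> fs xs S = s" S0 cd] S0 by blast
  then have "S \<in> Fam xs" unfolding Fam_def by auto
  then show "s \<in> fs xs ` Fam xs" using S by auto
qed

lemma Fam_sub: "Fam xs \<subseteq> Pow {..<length xs}" unfolding Fam_def by auto

lemma key_aux: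
  assumes sh: "shatters (Fam xs) T" and T: "T \<subseteq> {..<length xs}"
    and A1: "A1 \<subseteq> T" and B1: "B1 \<subseteq> T" and disj: "A1 \<inter> B1 = {}"
    and eq: "fs xs A1 = fs xs B1" and M: "M \<in> A1" and Mmax: "\<forall>b\<in>B1. b \<le> M"
  shows False
proof -
  obtain S where S: "S \<in> Fam xs" "S \<inter> T = A1" using sh A1 unfolding shatters_def by blast
  have Sn: "S \<subseteq> {..<length xs}" using S(1) by (auto simp: Fam_def)
  have fin: "finite S" "finite B1" "finite A1" using Sn B1 A1 T by (meson finite_lessThan finite_subset subset_trans)+
  have A1S: "A1 \<subseteq> S" using S(2) by auto
  have BS: "B1 \<inter> S = {}" using S(2) B1 disj by auto
  define S' where "S' = (S - A1) \<union> B1"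
  have S'n: "S' \<subseteq> {..<length xs}" using Sn B1 T by (auto simp: S'_def)
  have d1: "(S - A1) \<inter> B1 = {}" using BS by auto
  have "fs xs S' = fs xs (S - A1) + fs xs B1"
    unfolding S'_def fs_def using fin d1 by (simp add: sum.union_disjoint)
  also have "\<dots> = fs xs (S - A1) + fs xs A1" using eq by simp
  also have "\<dots> = fs xs S" unfolding fs_def using fin A1S
    by (metis add.commute sum.subset_diff)
  finally have feq: "fs xs S' = fs xs S" .
  have "cd S' = cd (S - A1) + cd B1"
    unfolding S'_def cd_def using fin d1 by (simp add: sum.union_disjoint)
  moreover have "cd S = cd (S - A1) + cd A1" unfolding cd_def using fin A1S
    by (metis add.commute sum.subset_diff)
  moreover have "cd B1 < 2^M"
    by (rule cd_less) (use Mmax M disj in \<open>auto simp: order.order_iff_strict\<close>)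
  moreover have "2^M \<le> cd A1" unfolding cd_def using fin M by (intro member_le_sum) auto
  ultimately have "cd S' < cd S" by linarith
  moreover have "cd S \<le> cd S'" using S(1) S'n feq unfolding Fam_def by auto
  ultimately show False by linarith
qed

lemma key:
  assumes sh: "shatters (Fam xs) T" and T: "T \<subseteq> {..<length xs}"
    and A: "A \<subseteq> T" and B: "B \<subseteq> T" and eq: "fs xs A = fs xs B"
  shows "A = B"
proof (rule ccontr)
  assume ne: "A \<noteq> B"
  define A1 where "A1 = A - B"
  define B1 where "B1 = B - A"
  have fin: "finite A" "finite B" using A B T by (meson finite_lessThan finite_subset subset_trans)+
  have "fs xs A = fs xs (A \<inter> B) + fs xs A1" unfolding fs_def A1_def using fin(1)
    by (rule sum.Int_Diff)
  moreover have "fs xs B = fs xs (B \<inter> A) + fs xs B1" unfolding fs_def B1_def using fin(2)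
    by (rule sum.Int_Diff)
  moreover have "B \<inter> A = A \<inter> B" by blast
  ultimately have eq1: "fs xs A1 = fs xs B1" using eq by simp
  have ne1: "A1 \<union> B1 \<noteq> {}" using ne unfolding A1_def B1_def by blast
  have fin1: "finite (A1 \<union> B1)" using fin unfolding A1_def B1_def by blast
  define M where "M = Max (A1 \<union> B1)"
  have Min: "M \<in> A1 \<union> B1" unfolding M_def using ne1 fin1 by (rule Max_in[rotated])
  have Mge: "\<forall>b\<in>A1 \<union> B1. b \<le> M" unfolding M_def using fin1 by simp
  have MA: "\<forall>b\<in>A1. b \<le> M" "\<forall>b\<in>B1. b \<le> M" using Mge by blast+
  have disj: "A1 \<inter> B1 = {}" unfolding A1_def B1_def by blast
  have disj': "B1 \<inter> A1 = {}" unfolding A1_def B1_def by blast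
  have A1T: "A1 \<subseteq> T" "B1 \<subseteq> T" using A B unfolding A1_def B1_def by blast+
  show False
  proof (cases "M \<in> A1")
    case True
    show False by (rule key_aux[OF sh T A1T(1) A1T(2) disj eq1 True MA(2)])
  next
    case False
    then have "M \<in> B1" using Min by blast
    then show False by (rule key_aux[OF sh T A1T(2) A1T(1) disj' eq1[symmetric] _ MA(1)])
  qed
qed




lemma sub_image:
  assumes "finite T" "A' \<subseteq># image_mset g (mset_set T)"
  shows "\<exists>A\<subseteq>T. A' = image_mset g (mset_set A)"
  using assms
proof (induction T arbitrary: A' rule: finite_induct)
  case empty then show ?case by simp
next
  case (insert x T)
  have im: "image_mset g (mset_set (insert x T)) = add_mset (g x) (image_mset g (mset_set T))"
    using insert.hyps by simp
  show ?case
  proof (cases "g x \<in># A'")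
    case True
    have "A' - {#g x#} \<subseteq># image_mset g (mset_set T)"
      using insert.prems im True by (metis Diff_eq_empty_iff_mset add_mset_diff_bothsides diff_empty mset_add)
    then obtain A where "A \<subseteq> T" "A' - {#g x#} = image_mset g (mset_set A)" using insert.IH by blast
    moreover have "x \<notin> A" using calculation insert.hyps by auto
    moreover have "finite A" using calculation(1) insert.hyps(1) finite_subset by blast
    ultimately have "image_mset g (mset_set (insert x A)) = add_mset (g x) (A' - {#g x#})"
      by simp
    also have "\<dots> = A'" using True by (rule insert_DiffM)
    finally have "image_mset g (mset_set (insert x A)) = A'" .
    then show ?thesis using \<open>A \<subseteq> T\<close>
      by (intro exI[of _ "insert x A"]) auto
  next
    case False
    have "A' \<subseteq># image_mset g (mset_set T)"
      using insert.prems im False by (smt (verit, ccfv_threshold) Diff_eq_empty_iff_mset add_mset_add_single diff_diff_add_mset diff_single_trivial in_diffD)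
    then show ?thesis using insert.IH by blast
  qed
qed

lemma binom_bound:
  fixes n d :: nat
  assumes "1 \<le> d" "d \<le> n"
  shows "(\<Sum>j\<le>d. real (n choose j)) \<le> (3 * real n / real d) ^ d"
proof -
  define t where "t = real d / real n"
  have t0: "0 < t" and t1: "t \<le> 1" using assms by (auto simp: t_def)
  have "(\<Sum>j\<le>d. real (n choose j)) \<le> (\<Sum>j\<le>d. real (n choose j) * t^j / t^d)"
  proof (rule sum_mono)
    fix j assume "j \<in> {..d}"
    then have "t^d \<le> t^j" using t0 t1 by (intro power_decreasing) auto
    then have "1 \<le> t^j / t^d" using t0 by simp
    then show "real (n choose j) \<le> real (n choose j) * t^j / t^d"
      by (metis mult_left_mono mult.right_neutral of_nat_0_le_iff times_divide_eq_right)
  qed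
  also have "\<dots> = (\<Sum>j\<le>d. real (n choose j) * t^j) / t^d" by (simp add: sum_divide_distrib)
  also have "\<dots> \<le> (\<Sum>j\<le>n. real (n choose j) * t^j * 1^(n-j)) / t^d"
  proof (rule divide_right_mono)
    have "(\<Sum>j\<le>d. real (n choose j) * t^j) \<le> (\<Sum>j\<le>n. real (n choose j) * t ^ j)"
      by (rule sum_mono2) (use t0 assms in auto)
    then show "(\<Sum>j\<le>d. real (n choose j) * t^j) \<le> (\<Sum>j\<le>n. real (n choose j) * t ^ j * 1 ^ (n - j))"
      by simp
    show "0 \<le> t^d" using t0 by simp
  qed
  also have "\<dots> = (t + 1)^n / t^d" by (subst binomial_ring) simp
  also have "\<dots> \<le> exp t ^ n / t^d"
    using t0 by (intro divide_right_mono power_mono) (auto simp: add.commute)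
  also have "exp t ^ n = exp (real n * t)" by (simp add: exp_of_nat_mult)
  also have "real n * t = real d" using assms by (simp add: t_def)
  also have "exp (real d) = exp 1 ^ d" by (metis exp_of_nat_mult mult.right_neutral)
  also have "exp 1 ^ d / t^d \<le> 3^d / t^d"
    using t0 exp_le by (intro divide_right_mono power_mono) auto
  also have "(3::real)^d / t^d = (3 * real n / real d)^d"
    using assms by (simp add: t_def power_divide)
  finally show ?thesis .
qed

lemma card_small_subsets:
  "card {T. T \<subseteq> {..<n} \<and> card T \<le> d} \<le> (\<Sum>j\<le>d. (n choose j))"
proof -
  have "{T. T \<subseteq> {..<n} \<and> card T \<le> d} = (\<Union>j\<in>{..d}. {T. T \<subseteq> {..<n} \<and> card T = j})" by auto
  then have "card {T. T \<subseteq> {..<n} \<and> card T \<le> d} \<le> (\<Sum>j\<le>d. card {T. T \<subseteq> {..<n} \<and> card T = j})"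
    by (simp add: card_UN_le)
  also have "\<dots> = (\<Sum>j\<le>d. (n choose j))" by (simp add: n_subsets)
  finally show ?thesis .
qed




lemma mdim_ge:
  assumes "W \<subseteq># Z" "dissociated W"
  shows "size W \<le> mdim Z"
proof -
  have "{size W | W. W \<subseteq># Z \<and> dissociated W} \<subseteq> {..size Z}"
    by (auto simp: size_mset_mono)
  then have "finite {size W | W. W \<subseteq># Z \<and> dissociated W}" using finite_subset by blast
  then show ?thesis unfolding mdim_def using assms by (intro Max_ge) auto
qed

lemma mdim_le: "mdim Z \<le> size Z"
proof -
  have "{size W | W. W \<subseteq># Z \<and> dissociated W} \<subseteq> {..size Z}"
    by (auto simp: size_mset_mono)
  moreover have "{#} \<subseteq># Z \<and> dissociated ({#}::'a::comm_monoid_add multiset)"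
    by (auto simp: dissociated_def)
  ultimately have "finite {size W | W. W \<subseteq># Z \<and> dissociated W}"
    "{size W | W. W \<subseteq># Z \<and> dissociated W} \<noteq> {}"
    using finite_subset by blast+
  then show ?thesis unfolding mdim_def
    using \<open>{size W | W. W \<subseteq># Z \<and> dissociated W} \<subseteq> {..size Z}\<close> by (simp add: subset_iff)
qed

lemma main_card:
  fixes Z :: "'a::ab_group_add multiset"
  shows "card (subset_sums Z) \<le> (\<Sum>j\<le>mdim Z. (size Z choose j))"
    and "card (subset_sums Z) \<ge> 1"
proof -
  obtain xs where Zxs: "mset xs = Z" using ex_mset by blast
  define n where "n = length xs"
  define d where "d = mdim Z"
  have Zim: "Z = image_mset (nth xs) (mset_set {..<n})"
  proof -
    have "Z = mset (map (nth xs) [0..<n])" using Zxs by (simp add: n_def map_nth)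
    also have "\<dots> = image_mset (nth xs) (mset_set {..<n})" by (simp add: atLeast0LessThan)
    finally show ?thesis .
  qed
  have sumsub: "subset_sums Z \<subseteq> fs xs ` Pow {..<n}"
  proof
    fix s assume "s \<in> subset_sums Z"
    then obtain Z' where Z': "Z' \<subseteq># Z" "s = sum_mset Z'" by (auto simp: subset_sums_def)
    then obtain A where A: "A \<subseteq> {..<n}" "Z' = image_mset (nth xs) (mset_set A)"
      using sub_image[of "{..<n}" Z' "nth xs"] Zim by auto
    have "s = fs xs A" using Z' A by (simp add: fs_def sum_unfold_sum_mset)
    then show "s \<in> fs xs ` Pow {..<n}" using A by auto
  qed
  have dimle: "card T \<le> d" if T: "T \<subseteq> {..<n}"
    and dis: "\<forall>A B. A \<subseteq> T \<longrightarrow> B \<subseteq> T \<longrightarrow> fs xs A = fs xs B \<longrightarrow> A = B" for T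
  proof -
    define W where "W = image_mset (nth xs) (mset_set T)"
    have finT: "finite T" using T finite_subset by blast
    have "W \<subseteq># Z" unfolding W_def Zim using T
      by (intro image_mset_subseteq_mono) (simp add: finT)
    moreover have "dissociated W" unfolding dissociated_def
    proof (intro allI impI)
      fix A' B' assume A': "A' \<subseteq># W" and B': "B' \<subseteq># W" and eq: "sum_mset A' = sum_mset B'"
      obtain A where A: "A \<subseteq> T" "A' = image_mset (nth xs) (mset_set A)"
        using sub_image[OF finT A'[unfolded W_def]] by auto
      obtain B where B: "B \<subseteq> T" "B' = image_mset (nth xs) (mset_set B)"
        using sub_image[OF finT B'[unfolded W_def]] by auto
      have "fs xs A = fs xs B" using eq A B by (simp add: fs_def sum_unfold_sum_mset)
      then have "A = B" using dis A B by blast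
      then show "A' = B'" using A B by simp
    qed
    ultimately have "size W \<le> d" unfolding d_def by (rule mdim_ge)
    then show ?thesis using finT by (simp add: W_def)
  qed
  have finFam: "finite (Fam xs)" using Fam_sub[of xs] finite_subset by blast
  have "subset_sums Z \<subseteq> fs xs ` Fam xs" using sumsub Fam_covers[of xs] n_def by blast
  then have c1: "card (subset_sums Z) \<le> card (Fam xs)"
    using finFam by (meson card_image_le card_mono finite_imageI le_trans)
  have c2: "card (Fam xs) \<le> card {T. T \<subseteq> {..<n} \<and> shatters (Fam xs) T}"
    using pajor[of "{..<n}" "Fam xs"] Fam_sub[of xs] n_def by auto
  have "{T. T \<subseteq> {..<n} \<and> shatters (Fam xs) T} \<subseteq> {T. T \<subseteq> {..<n} \<and> card T \<le> d}"
  proof safe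
    fix T assume "T \<subseteq> {..<n}" "shatters (Fam xs) T"
    then show "card T \<le> d" using dimle key[of xs T] n_def by blast
  qed
  then have c3: "card {T. T \<subseteq> {..<n} \<and> shatters (Fam xs) T} \<le> card {T. T \<subseteq> {..<n} \<and> card T \<le> d}"
    by (intro card_mono) auto
  have "size Z = n" using Zxs n_def by auto
  have "card (subset_sums Z) \<le> (\<Sum>j\<le>d. (n choose j))"
    using c1 c2 c3 card_small_subsets[of n d] by linarith
  then show "card (subset_sums Z) \<le> (\<Sum>j\<le>mdim Z. (size Z choose j))"
    using \<open>size Z = n\<close> d_def by simp
  have "0 \<in> subset_sums Z" unfolding subset_sums_def by (auto intro!: exI[of _ "{#}"])
  moreover have "finite (subset_sums Z)" using sumsub finite_subset by blast
  ultimately show "card (subset_sums Z) \<ge> 1"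
    by (metis One_nat_def Suc_leI card_gt_0_iff empty_iff)
qed

theorem proposition5p2:
  fixes Z :: "'a::ab_group_add multiset"
  assumes "mdim Z \<ge> 1"
  shows "let K = real (size Z) / real (mdim Z)
         in real (size Z) \<ge> K / (2 * (2 + log 2 K)) * log 2 (real (card (subset_sums Z)))"
proof -
  define n where "n = size Z"
  define d where "d = mdim Z"
  define K where "K = real n / real d"
  define N where "N = real (card (subset_sums Z))"
  have d1: "1 \<le> d" "d \<le> n" using assms mdim_le[of Z] by (auto simp: d_def n_def)
  have K1: "1 \<le> K" using d1 by (simp add: K_def)
  have N1: "1 \<le> N" using main_card(2)[of Z] by (simp add: N_def)
  have "N \<le> (\<Sum>j\<le>d. real (n choose j))"
    using main_card(1)[of Z] unfolding N_def n_def d_def by (metis of_nat_le_iff of_nat_sum)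
  also have "\<dots> \<le> (3 * K) ^ d" using binom_bound[OF d1] by (simp add: K_def)
  finally have Nle: "N \<le> (3 * K) ^ d" .
  have "log 2 N \<le> log 2 ((3 * K) ^ d)" using N1 Nle by simp
  also have "\<dots> = real d * (log 2 3 + log 2 K)" using K1 by (simp add: log_nat_power log_mult distrib_left)
  also have "log 2 3 \<le> (2::real)"
  proof -
    have "log 2 3 \<le> log 2 (4::real)" by simp
    also have "log 2 (4::real) = 2"
      by (metis log2_of_power_eq numeral_Bit0_eq_double of_nat_numeral power2_eq_square mult_2)
    finally show ?thesis .
  qed
  hence "real d * (log 2 3 + log 2 K) \<le> real d * (2 + log 2 K)" by (intro mult_left_mono) auto
  finally have logN: "log 2 N \<le> real d * (2 + log 2 K)" .
  have "0 \<le> log 2 K" using K1 by simp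
  then have L0: "0 < 2 + log 2 K" by simp
  have "K / (2 * (2 + log 2 K)) * log 2 N \<le> K / (2 * (2 + log 2 K)) * (real d * (2 + log 2 K))"
    using logN K1 L0 by (intro mult_left_mono) auto
  also have "\<dots> = K * real d / 2" using L0 by (simp add: field_simps)
  also have "\<dots> = real n / 2" using d1 by (simp add: K_def)
  also have "\<dots> \<le> real n" by simp
  finally show ?thesis unfolding Let_def K_def N_def n_def d_def by simp
qed


end
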